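(* Let $u$ be a recurrent aperiodic infinite word over a finite ordered alphabet, and let $w$ and $v$ be factors of $u$. Then it is impossible that simultaneously there exist $k,l\ge 0$ such that $T^k(u)$ is the lexicographically maximal element among the infinite words in the shift orbit closure of $u$ that start with $w$, and $T^l(u)$ is the lexicographically minimal element among the infinite words in the shift orbit closure of $u$ that start with $v$.
   Context: For an infinite word $u=u[0]u[1]\cdots$, $T^n u=u[n]u[n+1]\cdots$ is its $n$-th shift; the shift orbit closure of $u$ is the closure (in the product topology) of $\{T^n u: n\ge 0\}$. Words are compared lexicographically ($0<1<\dots<q-1$; $x<y$ if they agree up to some position and at the first differing position $x$ has the smaller letter). A word is recurrent if every factor occurs infinitely often; aperiodic means not ultimately periodic. *)

theory Defs
  imports Main
begin

definition shift :: "nat \<Rightarrow> (nat \<Rightarrow> 'a) \<Rightarrow> (nat \<Rightarrow> 'a)" where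
  "shift n u = (\<lambda>i. u (n + i))"

definition orbit :: "(nat \<Rightarrow> 'a) \<Rightarrow> (nat \<Rightarrow> 'a) set" where
  "orbit u = range (\<lambda>n. shift n u)"

text \<open>Closure in the product topology of the discrete alphabet: every finite prefix
  (cylinder neighbourhood) meets the set.\<close>
definition word_closure :: "(nat \<Rightarrow> 'a) set \<Rightarrow> (nat \<Rightarrow> 'a) set" where
  "word_closure S = {x. \<forall>n. \<exists>y\<in>S. \<forall>i<n. x i = y i}"

definition orbit_closure :: "(nat \<Rightarrow> 'a) \<Rightarrow> (nat \<Rightarrow> 'a) set" where
  "orbit_closure u = word_closure (orbit u)"

definition lex_less :: "(nat \<Rightarrow> 'a::linorder) \<Rightarrow> (nat \<Rightarrow> 'a) \<Rightarrow> bool" where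
  "lex_less x y \<longleftrightarrow> (\<exists>n. (\<forall>i<n. x i = y i) \<and> x n < y n)"

definition starts_with :: "(nat \<Rightarrow> 'a) \<Rightarrow> 'a list \<Rightarrow> bool" where
  "starts_with x w \<longleftrightarrow> (\<forall>i<length w. x i = w ! i)"

definition is_factor :: "'a list \<Rightarrow> (nat \<Rightarrow> 'a) \<Rightarrow> bool" where
  "is_factor w u \<longleftrightarrow> (\<exists>m. starts_with (shift m u) w)"

definition recurrent :: "(nat \<Rightarrow> 'a) \<Rightarrow> bool" where
  "recurrent u \<longleftrightarrow> (\<forall>w. is_factor w u \<longrightarrow> infinite {m. starts_with (shift m u) w})"

definition ultimately_periodic :: "(nat \<Rightarrow> 'a) \<Rightarrow> bool" where
  "ultimately_periodic u \<longleftrightarrow> (\<exists>p>0. \<exists>N. \<forall>i\<ge>N. u (i + p) = u i)"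

definition aperiodic :: "(nat \<Rightarrow> 'a) \<Rightarrow> bool" where
  "aperiodic u \<longleftrightarrow> \<not> ultimately_periodic u"

definition lex_max_in :: "(nat \<Rightarrow> 'a::linorder) \<Rightarrow> (nat \<Rightarrow> 'a) set \<Rightarrow> bool" where
  "lex_max_in x A \<longleftrightarrow> x \<in> A \<and> (\<forall>y\<in>A. \<not> lex_less x y)"

definition lex_min_in :: "(nat \<Rightarrow> 'a::linorder) \<Rightarrow> (nat \<Rightarrow> 'a) set \<Rightarrow> bool" where
  "lex_min_in x A \<longleftrightarrow> x \<in> A \<and> (\<forall>y\<in>A. \<not> lex_less y x)"

end

theory Submission
  imports Defs
begin

lemma lex_agree:
  fixes a b :: "nat \<Rightarrow> 'a::linorder"
  assumes ag: "\<forall>i<N. a i = b i" and dN: "d < N"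
    and n1: "\<not> lex_less a b" and n2: "\<not> lex_less (shift d b) (shift d a)"
  shows "a = b"
proof (rule ccontr)
  assume "a \<noteq> b"
  then obtain i where "a i \<noteq> b i" by auto
  define p where "p = (LEAST i. a i \<noteq> b i)"
  have ap: "a p \<noteq> b p" unfolding p_def by (rule LeastI, fact)
  have below: "\<forall>j<p. a j = b j" unfolding p_def using not_less_Least by blast
  have pN: "p \<ge> N" using ag ap by (meson not_le)
  show False
  proof (cases "a p < b p")
    case True
    then have "lex_less a b" unfolding lex_less_def using below by blast
    then show False using n1 by simp
  next
    case False
    then have bp: "b p < a p" using ap by auto
    have "lex_less (shift d b) (shift d a)" unfolding lex_less_def shift_def
    proof (intro exI[of _ "p - d"] conjI allI impI)
      fix i assume "i < p - d" then show "b (d + i) = a (d + i)" using below by auto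
    next
      show "b (d + (p - d)) < a (d + (p - d))" using bp dN pN by simp
    qed
    then show False using n2 by simp
  qed
qed

lemma rec_return:
  assumes "recurrent u"
  shows "\<exists>m>0. \<forall>i<N. u (a+m+i) = u (a+i)"
proof -
  define w0 where "w0 = map (\<lambda>i. u (a+i)) [0..<N]"
  have "starts_with (shift a u) w0" unfolding starts_with_def w0_def shift_def by simp
  then have "is_factor w0 u" unfolding is_factor_def by blast
  then have "infinite {m. starts_with (shift m u) w0}" using assms unfolding recurrent_def by blast
  then have "\<not> (\<forall>n\<in>{m. starts_with (shift m u) w0}. n < Suc a)"
    using finite_nat_set_iff_bounded by blast
  then obtain m' where m': "m' > a" "starts_with (shift m' u) w0" by (auto simp: not_less_eq)
  have "\<forall>i<N. u (a + (m'-a) + i) = u (a+i)"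
    using m' unfolding starts_with_def w0_def shift_def by auto
  then show ?thesis using m'(1) by (intro exI[of _ "m'-a"]) auto
qed

lemma periodic_contra:
  assumes "aperiodic u" "m > 0" "\<forall>i. u (a+m+i) = u (a+i)"
  shows False
proof -
  have "\<forall>i\<ge>a. u (i + m) = u i"
  proof (intro allI impI)
    fix i assume "i \<ge> a"
    then show "u (i + m) = u i" using assms(3)[rule_format, of "i-a"] by (simp add: add.commute add.left_commute)
  qed
  then show False using assms(1,2) unfolding aperiodic_def ultimately_periodic_def by blast
qed

lemma shift_in: "shift j u \<in> orbit_closure u"
  unfolding orbit_closure_def word_closure_def orbit_def by blast

theorem mainTheorem2:
  fixes u :: "nat \<Rightarrow> 'a::{finite,linorder}" and w v :: "'a list"
  assumes "recurrent u" and "aperiodic u"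
    and "is_factor w u" and "is_factor v u"
  shows "\<not> ((\<exists>k. lex_max_in (shift k u) {x \<in> orbit_closure u. starts_with x w}) \<and>
             (\<exists>l. lex_min_in (shift l u) {x \<in> orbit_closure u. starts_with x v}))"
proof
  assume "((\<exists>k. lex_max_in (shift k u) {x \<in> orbit_closure u. starts_with x w}) \<and>
             (\<exists>l. lex_min_in (shift l u) {x \<in> orbit_closure u. starts_with x v}))"
  then obtain k l where
    mx: "lex_max_in (shift k u) {x \<in> orbit_closure u. starts_with x w}" and
    mn: "lex_min_in (shift l u) {x \<in> orbit_closure u. starts_with x v}" by blast
  have sw: "\<forall>i<length w. u (k+i) = w ! i" using mx unfolding lex_max_in_def starts_with_def shift_def by auto
  have sv: "\<forall>i<length v. u (l+i) = v ! i" using mn unfolding lex_min_in_def starts_with_def shift_def by auto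
  have maxp: "\<And>j. starts_with (shift j u) w \<Longrightarrow> \<not> lex_less (shift k u) (shift j u)"
    using mx shift_in unfolding lex_max_in_def by blast
  have minp: "\<And>j. starts_with (shift j u) v \<Longrightarrow> \<not> lex_less (shift j u) (shift l u)"
    using mn shift_in unfolding lex_min_in_def by blast
  show False
  proof (cases "k \<le> l")
    case True
    define d where "d = l - k"
    define N where "N = d + length v + length w + 1"
    obtain m where m: "m > 0" "\<forall>i<N. u (k+m+i) = u (k+i)"
      using rec_return[OF assms(1)] by blast
    have "starts_with (shift (k+m) u) w" unfolding starts_with_def shift_def
      using m(2) sw N_def by auto
    then have c1: "\<not> lex_less (shift k u) (shift (k+m) u)" by (rule maxp)
    have "starts_with (shift (l+m) u) v" unfolding starts_with_def shift_def
    proof (intro allI impI)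
      fix i assume "i < length v"
      then have "u (k+m+(d+i)) = u (k+(d+i))" using m(2) N_def by auto
      then show "u (l + m + i) = v ! i" using sv \<open>i < length v\<close> True d_def
        by (simp add: add.commute add.left_commute)
    qed
    then have c2: "\<not> lex_less (shift (l+m) u) (shift l u)" by (rule minp)
    have e1: "shift d (shift (k+m) u) = shift (l+m) u" "shift d (shift k u) = shift l u"
      unfolding shift_def d_def using True by (auto simp: add.commute add.left_commute)
    have "shift k u = shift (k+m) u"
      apply (rule lex_agree[of N _ _ d])
      using m(2) c1 c2 e1 N_def unfolding shift_def by auto
    then have "\<forall>i. u (k+m+i) = u (k+i)" unfolding shift_def by (metis)
    then show False using periodic_contra[OF assms(2) m(1)] by blast
  next
    case False
    define d where "d = k - l"
    define N where "N = d + length v + length w + 1"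
    obtain m where m: "m > 0" "\<forall>i<N. u (l+m+i) = u (l+i)"
      using rec_return[OF assms(1)] by blast
    have "starts_with (shift (l+m) u) v" unfolding starts_with_def shift_def
      using m(2) sv N_def by auto
    then have c1: "\<not> lex_less (shift (l+m) u) (shift l u)" by (rule minp)
    have "starts_with (shift (k+m) u) w" unfolding starts_with_def shift_def
    proof (intro allI impI)
      fix i assume "i < length w"
      then have "u (l+m+(d+i)) = u (l+(d+i))" using m(2) N_def by auto
      then show "u (k + m + i) = w ! i" using sw \<open>i < length w\<close> False d_def
        by (simp add: add.commute add.left_commute)
    qed
    then have c2: "\<not> lex_less (shift k u) (shift (k+m) u)" by (rule maxp)
    have e1: "shift d (shift (l+m) u) = shift (k+m) u" "shift d (shift l u) = shift k u"
      unfolding shift_def d_def using False by (auto simp: add.commute add.left_commute)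
    have "shift (l+m) u = shift l u"
      apply (rule lex_agree[of N _ _ d])
      using m(2) c1 c2 e1 N_def unfolding shift_def by auto
    then have "\<forall>i. u (l+m+i) = u (l+i)" unfolding shift_def by (metis)
    then show False using periodic_contra[OF assms(2) m(1)] by blast
  qed
qed

end
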